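(* Let $(\alpha,\beta)\in(0,\infty)^2$ with $\nabla I(\alpha,\beta)=0$. Then $I(\alpha,\beta)<\sqrt{\pi/2}$.
   Context: For $\alpha,\beta\ge 0$ define $I(\alpha,\beta)=\exp\left(-\frac{\alpha\beta}{2}\right)\int_{-\alpha}^{\beta}\exp\left(-\frac{\sigma^2}{2}\right)d\sigma$. *)

theory Defs
  imports "HOL-Analysis.Analysis"
begin

definition I :: "real \<Rightarrow> real \<Rightarrow> real" where
  "I \<alpha> \<beta> = exp (- (\<alpha> * \<beta>) / 2) * integral {-\<alpha>..\<beta>} (\<lambda>\<sigma>. exp (- (\<sigma>^2) / 2))"

end

theory Submission
  imports Defs
begin


lemma exp_up: fixes x :: real assumes "0 \<le> x" "x < 1" shows "exp x \<le> 1 / (1 - x)"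
proof -
  have "1 - x \<le> exp (-x)" using exp_ge_add_one_self[of "-x"] by simp
  hence "(1 - x) * exp x \<le> 1" by (metis exp_minus exp_gt_zero less_eq_real_def mult.commute pos_le_divide_eq divide_inverse mult_1)
  thus ?thesis using assms by (simp add: field_simps mult.commute)
qed

lemma exp_pow: "exp (x::real) ^ n = exp (real n * x)" by (simp add: exp_of_nat_mult)

lemma N1: "exp (0.34::real) < 1 / 0.68"
proof -
  have "exp (0.34::real) = exp 0.17 ^ 2" by (simp add: exp_pow)
  also have "\<dots> \<le> (1/0.83) ^ 2" using exp_up[of "0.17::real"] by (intro power_mono) auto
  finally show ?thesis by (simp add: power2_eq_square power4_eq_xxxx)
qed

lemma N2: "exp (0.68::real) > 1.9513"
proof -
  have "(1 + 0.34 + 0.34^2/2 :: real) \<le> exp 0.34" by (rule exp_lower_Taylor_quadratic) simp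
  hence "(1 + 0.34 + 0.34^2/2 :: real) ^2 \<le> exp 0.34 ^ 2" by (intro power_mono) auto
  also have "exp (0.34::real) ^ 2 = exp 0.68" by (simp add: exp_pow)
  finally show ?thesis by (simp add: power2_eq_square power4_eq_xxxx)
qed

lemma N3: "exp (1::real) > 1.6"
  using exp_lower_Taylor_quadratic[of 1] by simp

lemma N4: "exp (0.665::real) < 13/6"
proof -
  have "exp (0.665::real) = exp 0.16625 ^ 4" by (simp add: exp_pow)
  also have "\<dots> \<le> (1/(1-0.16625)) ^ 4" using exp_up[of "0.16625::real"] by (intro power_mono) auto
  finally show ?thesis by (simp add: power2_eq_square power4_eq_xxxx)
qed

lemma N5: "exp (0.48::real) > 1.6"
proof -
  have "(1 + 0.24 + 0.24^2/2 :: real) \<le> exp 0.24" by (rule exp_lower_Taylor_quadratic) simp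
  hence "(1 + 0.24 + 0.24^2/2 :: real) ^2 \<le> exp 0.24 ^ 2" by (intro power_mono) auto
  also have "exp (0.24::real) ^ 2 = exp 0.48" by (simp add: exp_pow)
  finally show ?thesis by (simp add: power2_eq_square power4_eq_xxxx)
qed

lemma N6: "exp (1.28::real) \<le> 16/3"
proof -
  have "exp (1.28::real) = exp 0.32 ^ 4" by (simp add: exp_pow)
  also have "\<dots> \<le> (1/(1-0.32)) ^ 4" using exp_up[of "0.32::real"] by (intro power_mono) auto
  finally show ?thesis by (simp add: power2_eq_square power4_eq_xxxx)
qed

lemma N7: "exp (0.24::real) > 16/13"
  using exp_ge_add_one_self[of "0.24::real"] by simp

lemma pi_bd: "sqrt (pi/2) > 5/4"
proof -
  have "pi > 3.14" using pi_approx by simp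
  hence "(5/4)^2 < pi/2" by (simp add: power2_eq_square)
  thus ?thesis by (rule real_less_rsqrt)
qed



definition ph :: "real \<Rightarrow> real" where "ph s = exp (- (s^2) / 2)"
definition G :: "real \<Rightarrow> real" where "G x = integral {0..x} ph"

lemma ph_cont: "continuous_on S ph"
  unfolding ph_def by (intro continuous_intros) auto

lemma G_deriv: assumes "x > 0" shows "(G has_real_derivative ph x) (at x)"
proof -
  have "((\<lambda>x. integral {0..x} ph) has_real_derivative ph x) (at x within {0..x+1})"
    by (rule integral_has_real_derivative) (use assms ph_cont in auto)
  moreover have "at x within {0..x+1} = at x"
    using assms by (intro at_within_Icc_at) auto
  ultimately show ?thesis unfolding G_def by simp
qed

lemma int_split: assumes "x \<ge> 0" "y \<ge> 0"
  shows "integral {-x..y} ph = G x + G y"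
proof -
  have "integral {-x..0} ph + integral {0..y} ph = integral {-x..y} ph"
    using Henstock_Kurzweil_Integration.integral_combine[where a="-x" and c=0 and b=y and f=ph] assms integrable_continuous_real[OF ph_cont] by auto
  moreover have "integral {-x..-0} (\<lambda>s. ph (-s)) = integral {0..x} ph"
    by (rule Henstock_Kurzweil_Integration.integral_reflect_real)
  moreover have "(\<lambda>s. ph (-s)) = ph" by (auto simp: ph_def)
  ultimately show ?thesis unfolding G_def by simp
qed

lemma I_eq: assumes "x \<ge> 0" "y \<ge> 0"
  shows "I x y = exp (- (x*y)/2) * (G x + G y)"
  using int_split[OF assms] unfolding I_def ph_def[abs_def] by simp

lemma partial1:
  assumes a: "a > 0" and b: "b > 0"
    and d: "((\<lambda>p. I (fst p) (snd p)) has_derivative (\<lambda>_. 0)) (at (a, b))"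
  shows "b * (G a + G b) = 2 * ph a"
proof -
  have p: "((\<lambda>x. (x, b)) has_derivative (\<lambda>h. (h, 0))) (at a)"
    by (auto intro!: derivative_eq_intros)
  have d1: "((\<lambda>x. I x b) has_derivative (\<lambda>_. 0)) (at a)" using diff_chain_at[OF p d] by (simp add: o_def)
  define D where "D = exp (- (a*b)/2) * (-(b/2)) * (G a + G b) + exp (- (a*b)/2) * ph a"
  have "((\<lambda>x. exp (- (x*b)/2) * (G x + G b)) has_real_derivative D) (at a)"
    unfolding D_def by (auto intro!: derivative_eq_intros G_deriv a)
  hence d2: "((\<lambda>x. I x b) has_derivative (\<lambda>h. D * h)) (at a)"
    unfolding has_field_derivative_def
    by (rule has_derivative_transform_within_open[where s="{0<..}"]) (use a b in \<open>auto simp: I_eq\<close>)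
  have "(\<lambda>h. D * h) = (\<lambda>_. 0)" using has_derivative_unique[OF d2 d1] .
  hence "D = 0" by (metis mult_1_right)
  hence "exp (- (a*b)/2) * (ph a - (b/2) * (G a + G b)) = 0" unfolding D_def by (simp add: algebra_simps)
  thus ?thesis by simp
qed

lemma partial2:
  assumes a: "a > 0" and b: "b > 0"
    and d: "((\<lambda>p. I (fst p) (snd p)) has_derivative (\<lambda>_. 0)) (at (a, b))"
  shows "a * (G a + G b) = 2 * ph b"
proof -
  have p: "((\<lambda>y. (a, y)) has_derivative (\<lambda>h. (0, h))) (at b)"
    by (auto intro!: derivative_eq_intros)
  have d1: "((\<lambda>y. I a y) has_derivative (\<lambda>_. 0)) (at b)"
    using diff_chain_at[OF p d] by (simp add: o_def)
  define D where "D = exp (- (a*b)/2) * (-(a/2)) * (G a + G b) + exp (- (a*b)/2) * ph b"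
  have "((\<lambda>y. exp (- (a*y)/2) * (G a + G y)) has_real_derivative D) (at b)"
    unfolding D_def by (auto intro!: derivative_eq_intros G_deriv b)
  hence d2: "((\<lambda>y. I a y) has_derivative (\<lambda>h. D * h)) (at b)"
    unfolding has_field_derivative_def
    by (rule has_derivative_transform_within_open[where s="{0<..}"]) (use a b in \<open>auto simp: I_eq\<close>)
  have "(\<lambda>h. D * h) = (\<lambda>_. 0)" using has_derivative_unique[OF d2 d1] .
  hence "D = 0" by (metis mult_1_right)
  hence "exp (- (a*b)/2) * (ph b - (a/2) * (G a + G b)) = 0" unfolding D_def by (simp add: algebra_simps)
  thus ?thesis by simp
qed

definition f :: "real \<Rightarrow> real" where "f x = x * ph x"

lemma f_deriv: "(f has_real_derivative (1 - x^2) * ph x) (at x)"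
  unfolding f_def ph_def by (auto intro!: derivative_eq_intros simp: algebra_simps power2_eq_square)

lemma f_inc: assumes "0 \<le> x" "x \<le> y" "y \<le> 1" shows "f x \<le> f y"
  by (rule DERIV_nonneg_imp_nondecreasing[OF assms(2)])
     (use assms f_deriv in \<open>auto intro!: exI mult_nonneg_nonneg simp: ph_def abs_square_le_1\<close>)

lemma f_dec: assumes "1 \<le> x" "x \<le> y" shows "f y \<le> f x"
proof (rule DERIV_nonpos_imp_nonincreasing[OF assms(2)])
  fix z assume "x \<le> z" "z \<le> y"
  hence "1 \<le> z^2" using assms by (simp add: one_le_power)
  hence "(1 - z^2) * ph z \<le> 0" by (simp add: ph_def mult_nonpos_nonneg)
  thus "\<exists>y. DERIV f z :> y \<and> y \<le> 0" using f_deriv by blast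
qed

lemma f_strict: assumes "0 \<le> x" "x < y" "y \<le> 1" shows "f x < f y"
proof (rule DERIV_pos_imp_increasing_open[OF assms(2)])
  fix z assume "x < z" "z < y"
  hence "z^2 < 1" using assms by (simp add: abs_square_less_1)
  hence "(1 - z^2) * ph z > 0" by (simp add: ph_def)
  thus "\<exists>y. DERIV f z :> y \<and> y > 0" using f_deriv by blast
next
  show "continuous_on {x..y} f" unfolding f_def ph_def by (intro continuous_intros) auto
qed

lemma ph_pos: "ph x > 0" by (simp add: ph_def)
lemma ph_le1: "ph x \<le> 1" by (simp add: ph_def)

lemma G_le: assumes "x \<ge> 0" shows "G x \<le> x"
proof -
  have "integral {0..x} ph \<le> integral {0..x} (\<lambda>_. 1::real)"
    by (rule integral_le) (auto intro: integrable_continuous_real ph_cont simp: ph_le1)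
  thus ?thesis using assms unfolding G_def by simp
qed

lemma main:
  assumes a: "a > 0" and ab: "a \<le> b"
    and e1: "b * S = 2 * ph a" and e2: "a * S = 2 * ph b" and e0: "S = G a + G b"
  shows "exp (- (a*b)/2) * S < 5/4"
proof -
  have b: "b > 0" using a ab by simp
  have V: "exp (- (a*b)/2) * S = 2 * exp (- (a^2 + a*b)/2) / b"
  proof -
    have S: "S = 2 * ph a / b" using e1 b by (simp add: field_simps)
    have "- (a^2 + a*b)/2 = - (a^2)/2 + - (a*b)/2" by simp
    hence "exp (- (a^2 + a*b)/2) = ph a * exp (- (a*b)/2)" unfolding ph_def by (metis exp_add)
    thus ?thesis unfolding S by simp
  qed
  have fab: "f a = f b"
  proof -
    have "a * (b * S) = b * (a * S)" by simp
    thus ?thesis using e1 e2 unfolding f_def by simp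
  qed
  show ?thesis
  proof (cases "b \<ge> 8/5")
    case True
    have "a^2 + a*b > 0" using a b by (intro add_nonneg_pos) auto
    hence "- (a^2 + a*b)/2 < 0" by simp
    hence "exp (- (a^2 + a*b)/2) < 1" by simp
    hence "2 * exp (- (a^2 + a*b)/2) < 2" by simp
    also have "2 \<le> 5/4 * b" using True by simp
    finally have "2 * exp (- (a^2 + a*b)/2) < 5/4 * b" .
    thus ?thesis unfolding V pos_divide_less_eq[OF b] .
  next
    case bl: False
    show ?thesis
    proof (cases "a \<ge> 1")
      case True
      have "a^2 \<ge> 1" using True by (simp add: one_le_power)
      moreover have "a*b \<ge> 1*1" using True ab by (intro mult_mono) auto
      ultimately have "a^2 + a*b \<ge> 2" by simp
      hence "exp (- (a^2 + a*b)/2) \<le> exp (-1)" by simp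
      also have "\<dots> < 5/8" using N3 by (simp add: exp_minus field_simps)
      finally have "2 * exp (- (a^2 + a*b)/2) < 5/4 * 1" by simp
      also have "\<dots> \<le> 5/4 * b" using True ab by simp
      finally show ?thesis unfolding V pos_divide_less_eq[OF b] .
    next
      case al: False
      show ?thesis
      proof (cases "b \<le> 1")
        case True
        have "a = b"
        proof (rule ccontr)
          assume "a \<noteq> b" hence "a < b" using ab by simp
          hence "f a < f b" using f_strict a True by simp
          thus False using fab by simp
        qed
        hence "a * G a = ph a" using e2 e0 by simp
        moreover have "a * G a \<le> a * a" using G_le[of a] a by (intro mult_left_mono) auto
        ultimately have "ph a \<le> a^2" by (simp add: power2_eq_square)
        have a2: "a^2 \<ge> 0.68"
        proof (rule ccontr)
          assume "\<not> a^2 \<ge> 0.68"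
          hence "exp (-0.34) \<le> ph a" unfolding ph_def by simp
          moreover have "exp (-0.34::real) > 0.68" using N1 by (simp add: exp_minus field_simps)
          ultimately show False using \<open>ph a \<le> a^2\<close> \<open>\<not> a^2 \<ge> 0.68\<close> by simp
        qed
        have a82: "a \<ge> 0.82"
        proof (rule ccontr)
          assume "\<not> a \<ge> 0.82"
          hence "a^2 < 0.82^2" using a by (intro power_strict_mono) auto
          thus False using a2 by (simp add: power2_eq_square)
        qed
        have "2 * exp (- (a^2 + a*b)/2) / b = 2 * exp (- (a^2)) / a"
          using \<open>a = b\<close> by (simp add: power2_eq_square)
        also have "\<dots> \<le> 2 * exp (-0.68) / 0.82"
          using a2 a82 by (intro divide_mono mult_left_mono) auto
        also have "\<dots> < 5/4" using N2 by (simp add: exp_minus field_simps)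
        finally show ?thesis unfolding V .
      next
        case b1: False
        show ?thesis
        proof (cases "b \<le> 1.3")
          case True
          have "f b \<ge> f 1.3" using f_dec[of b "1.3"] True b1 by simp
          moreover have "f 1.3 > f 0.6"
          proof -
            have "exp (0.665::real) * exp (- 0.845) = exp (-0.18)" by (simp flip: exp_add)
            moreover have "exp (0.665::real) * exp (- 0.845) < 13/6 * exp (-0.845)"
              using N4 by (intro mult_strict_right_mono) auto
            ultimately have "exp (-0.18::real) < 13/6 * exp (-0.845)" by simp
            thus ?thesis unfolding f_def ph_def by (simp add: power2_eq_square)
          qed
          ultimately have a6: "a \<ge> 0.6"
            using f_inc[of a "0.6"] fab a by (cases "a \<ge> 0.6") auto
          have "a^2 + a*b \<ge> 0.36 + 0.6"
          proof -
            have "a^2 \<ge> 0.6^2" using a6 by (intro power_mono) auto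
            moreover have "a*b \<ge> 0.6 * 1" using a6 b1 by (intro mult_mono) auto
            ultimately show ?thesis by (simp add: power2_eq_square)
          qed
          hence "exp (- (a^2 + a*b)/2) \<le> exp (-0.48)" by simp
          hence "2 * exp (- (a^2 + a*b)/2) \<le> 2 * exp (-0.48)" by simp
          also have "\<dots> < 5/4 * 1" using N5 by (simp add: exp_minus field_simps)
          also have "\<dots> \<le> 5/4 * b" using b1 by simp
          finally show ?thesis unfolding V pos_divide_less_eq[OF b] .
        next
          case False
          have "f b \<ge> f 1.6" using f_dec[of b "1.6"] False bl by simp
          moreover have "f 1.6 \<ge> 0.3"
            using N6 unfolding f_def ph_def by (simp add: power2_eq_square exp_minus field_simps)
          moreover have "a \<ge> f a" unfolding f_def using ph_le1[of a] a by (simp add: mult_left_le)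
          ultimately have a3: "a \<ge> 0.3" using fab by simp
          have "a^2 + a*b \<ge> 0.09 + 0.39"
          proof -
            have "a^2 \<ge> 0.3^2" using a3 by (intro power_mono) auto
            moreover have "a*b \<ge> 0.3 * 1.3" using a3 False by (intro mult_mono) auto
            ultimately show ?thesis by (simp add: power2_eq_square)
          qed
          hence "exp (- (a^2 + a*b)/2) \<le> exp (-0.24)" by simp
          hence "2 * exp (- (a^2 + a*b)/2) / b \<le> 2 * exp (-0.24) / 1.3" using False
            by (intro divide_mono) auto
          also have "\<dots> < 5/4" using N7 by (simp add: exp_minus field_simps)
          finally show ?thesis unfolding V .
        qed
      qed
    qed
  qed
qed

theorem lemma3p5:
  fixes \<alpha> \<beta> :: real
  assumes "\<alpha> > 0" and "\<beta> > 0"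
    and "((\<lambda>p. I (fst p) (snd p)) has_derivative (\<lambda>_. 0)) (at (\<alpha>, \<beta>))"
  shows "I \<alpha> \<beta> < sqrt (pi / 2)"
proof -
  define S where "S = G \<alpha> + G \<beta>"
  have e1: "\<beta> * S = 2 * ph \<alpha>" and e2: "\<alpha> * S = 2 * ph \<beta>"
    using partial1[OF assms] partial2[OF assms] unfolding S_def by auto
  have Ie: "I \<alpha> \<beta> = exp (- (\<alpha>*\<beta>)/2) * S" unfolding S_def using assms I_eq by simp
  have "exp (- (\<alpha>*\<beta>)/2) * S < 5/4"
  proof (cases "\<alpha> \<le> \<beta>")
    case True thus ?thesis using main[OF assms(1) True e1 e2 S_def] by simp
  next
    case False
    have S2: "S = G \<beta> + G \<alpha>" using S_def by simp
    have "\<beta> \<le> \<alpha>" using False by simp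
    thus ?thesis using main[OF assms(2) _ e2 e1 S2] by (simp add: mult.commute)
  qed
  thus ?thesis unfolding Ie using pi_bd by linarith
qed

end
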